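(* Let $\mathbb{F}$ be an algebraically closed field with $\mathrm{char}\,\mathbb{F}=2$ and $n\ge8$. Let $\underline{a}=(e_1,e_2,\mathbf{u}_1,\mathbf{v}_1,\mathbf{u}_2,\mathbf{v}_2,\mathbf{u}_3,\mathbf{v}_3,0,\ldots,0)\in\mathbf{O}^n$ and let $\underline{b}\in\mathbf{O}^n$ be such that $f(\underline{a})=f(\underline{b})$ for all $f\in S_n^{(3)}$. Then ${\rm G}_2\underline{a}={\rm G}_2\underline{b}$.
   Context: The split octonion algebra $\mathbf{O}$ is the 8-dimensional $\mathbb{F}$-vector space of formal matrices $a=\begin{pmatrix}\alpha&\mathbf{u}\\ \mathbf{v}&\beta\end{pmatrix}$ with $\alpha,\beta\in\mathbb{F}$, $\mathbf{u},\mathbf{v}\in\mathbb{F}^3$, with multiplication $\begin{pmatrix}\alpha&\mathbf{u}\\ \mathbf{v}&\beta\end{pmatrix}\begin{pmatrix}\alpha'&\mathbf{u}'\\ \mathbf{v}'&\beta'\end{pmatrix}=\begin{pmatrix}\alpha\alpha'+\mathbf{u}\cdot\mathbf{v}'&\alpha\mathbf{u}'+\beta'\mathbf{u}-\mathbf{v}\times\mathbf{v}'\\ \alpha'\mathbf{v}+\beta\mathbf{v}'+\mathbf{u}\times\mathbf{u}'&\beta\beta'+\mathbf{v}\cdot\mathbf{u}'\end{pmatrix}$ (dot product and cross product on $\mathbb{F}^3$). Trace $\mathrm{tr}(a)=\alpha+\beta$, norm $n(a)=\alpha\beta-\mathbf{u}\cdot\mathbf{v}$. With $\mathbf{c}_1,\mathbf{c}_2,\mathbf{c}_3$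 the standard basis of $\mathbb{F}^3$: $e_1$ has $\alpha=1$ and all else $0$, $e_2$ has $\beta=1$ and all else $0$, $\mathbf{u}_i$ has $\mathbf{u}=\mathbf{c}_i$ and all else $0$, $\mathbf{v}_i$ has $\mathbf{v}=\mathbf{c}_i$ and all else $0$. ${\rm G}_2=\mathrm{Aut}(\mathbf{O})$ acts diagonally on $\mathbf{O}^n$. $S_n^{(3)}$ is the set of functions on $\mathbf{O}^n$: $\underline{a}\mapsto n(a_i)$, $\underline{a}\mapsto\mathrm{tr}(a_i)$ ($1\le i\le n$), $\underline{a}\mapsto\mathrm{tr}(a_ia_j)$ ($1\le i<j\le n$), and $\underline{a}\mapsto\mathrm{tr}((a_ia_j)a_k)$ ($1\le i<j<k\le n$). *)

theory Defs
  imports "HOL-Computational_Algebra.Polynomial"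
begin

type_synonym 'a vec3 = "'a \<times> 'a \<times> 'a"

definition dot3 :: "'a::comm_ring_1 vec3 \<Rightarrow> 'a vec3 \<Rightarrow> 'a" where
  "dot3 x y = (case x of (x1,x2,x3) \<Rightarrow> case y of (y1,y2,y3) \<Rightarrow> x1*y1 + x2*y2 + x3*y3)"

definition cross3 :: "'a::comm_ring_1 vec3 \<Rightarrow> 'a vec3 \<Rightarrow> 'a vec3" where
  "cross3 x y = (case x of (x1,x2,x3) \<Rightarrow> case y of (y1,y2,y3) \<Rightarrow>
      (x2*y3 - x3*y2, x3*y1 - x1*y3, x1*y2 - x2*y1))"

definition vadd3 :: "'a::comm_ring_1 vec3 \<Rightarrow> 'a vec3 \<Rightarrow> 'a vec3" where
  "vadd3 x y = (case x of (x1,x2,x3) \<Rightarrow> case y of (y1,y2,y3) \<Rightarrow> (x1+y1, x2+y2, x3+y3))"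

definition vsmult3 :: "'a::comm_ring_1 \<Rightarrow> 'a vec3 \<Rightarrow> 'a vec3" where
  "vsmult3 c x = (case x of (x1,x2,x3) \<Rightarrow> (c*x1, c*x2, c*x3))"

text \<open>Split octonion (alpha, u; v, beta), written as the formal matrix
  [[alpha, u], [v, beta]].\<close>

datatype 'a oct = Oct (oa: 'a) (ou: "'a vec3") (ov: "'a vec3") (ob: 'a)

definition omult :: "'a::comm_ring_1 oct \<Rightarrow> 'a oct \<Rightarrow> 'a oct" where
  "omult x y = Oct
     (oa x * oa y + dot3 (ou x) (ov y))
     (vadd3 (vadd3 (vsmult3 (oa x) (ou y)) (vsmult3 (ob y) (ou x))) (vsmult3 (-1) (cross3 (ov x) (ov y))))
     (vadd3 (vadd3 (vsmult3 (oa y) (ov x)) (vsmult3 (ob x) (ov y))) (cross3 (ou x) (ou y)))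
     (ob x * ob y + dot3 (ov x) (ou y))"

definition oadd :: "'a::comm_ring_1 oct \<Rightarrow> 'a oct \<Rightarrow> 'a oct" where
  "oadd x y = Oct (oa x + oa y) (vadd3 (ou x) (ou y)) (vadd3 (ov x) (ov y)) (ob x + ob y)"

definition osmult :: "'a::comm_ring_1 \<Rightarrow> 'a oct \<Rightarrow> 'a oct" where
  "osmult c x = Oct (c * oa x) (vsmult3 c (ou x)) (vsmult3 c (ov x)) (c * ob x)"

definition ozero :: "'a::comm_ring_1 oct" where
  "ozero = Oct 0 (0,0,0) (0,0,0) 0"

definition otr :: "'a::comm_ring_1 oct \<Rightarrow> 'a" where
  "otr x = oa x + ob x"

definition onorm :: "'a::comm_ring_1 oct \<Rightarrow> 'a" where
  "onorm x = oa x * ob x - dot3 (ou x) (ov x)"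

definition oe1 :: "'a::comm_ring_1 oct" where "oe1 = Oct 1 (0,0,0) (0,0,0) 0"
definition oe2 :: "'a::comm_ring_1 oct" where "oe2 = Oct 0 (0,0,0) (0,0,0) 1"
definition ou1 :: "'a::comm_ring_1 oct" where "ou1 = Oct 0 (1,0,0) (0,0,0) 0"
definition ou2 :: "'a::comm_ring_1 oct" where "ou2 = Oct 0 (0,1,0) (0,0,0) 0"
definition ou3 :: "'a::comm_ring_1 oct" where "ou3 = Oct 0 (0,0,1) (0,0,0) 0"
definition ov1 :: "'a::comm_ring_1 oct" where "ov1 = Oct 0 (0,0,0) (1,0,0) 0"
definition ov2 :: "'a::comm_ring_1 oct" where "ov2 = Oct 0 (0,0,0) (0,1,0) 0"
definition ov3 :: "'a::comm_ring_1 oct" where "ov3 = Oct 0 (0,0,0) (0,0,1) 0"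

definition G2 :: "('a::comm_ring_1 oct \<Rightarrow> 'a oct) set" where
  "G2 = {g. bij g \<and>
            (\<forall>x y. g (oadd x y) = oadd (g x) (g y)) \<and>
            (\<forall>c x. g (osmult c x) = osmult c (g x)) \<and>
            (\<forall>x y. g (omult x y) = omult (g x) (g y))}"

text \<open>Diagonal action on O^n (n-tuples as lists of length n) and orbits.\<close>

definition G2_orbit :: "'a::comm_ring_1 oct list \<Rightarrow> 'a oct list set" where
  "G2_orbit xs = {map g xs | g. g \<in> G2}"

text \<open>Agreement of all functions in S_n^(3) on two n-tuples.\<close>

definition same_S3 :: "nat \<Rightarrow> 'a::comm_ring_1 oct list \<Rightarrow> 'a oct list \<Rightarrow> bool" where
  "same_S3 n xs ys \<longleftrightarrow>
     (\<forall>i<n. onorm (xs!i) = onorm (ys!i)) \<and>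
     (\<forall>i<n. otr (xs!i) = otr (ys!i)) \<and>
     (\<forall>i j. i < j \<and> j < n \<longrightarrow> otr (omult (xs!i) (xs!j)) = otr (omult (ys!i) (ys!j))) \<and>
     (\<forall>i j k. i < j \<and> j < k \<and> k < n \<longrightarrow>
        otr (omult (omult (xs!i) (xs!j)) (xs!k)) = otr (omult (omult (ys!i) (ys!j)) (ys!k)))"

end

theory Submission
  imports Defs "Jordan_Normal_Form.Determinant"
begin


lemma oct_cases3:
  obtains a u1 u2 u3 v1 v2 v3 b where "x = Oct a (u1,u2,u3) (v1,v2,v3) b"
  by (metis prod_cases3 oct.exhaust)

lemma oct_eqI: "oa x = oa y \<Longrightarrow> ou x = ou y \<Longrightarrow> ov x = ov y \<Longrightarrow> ob x = ob y \<Longrightarrow> x = y"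
  by (cases x; cases y) auto

lemmas odefs = omult_def oadd_def osmult_def ozero_def otr_def onorm_def dot3_def cross3_def
  vadd3_def vsmult3_def oe1_def oe2_def ou1_def ou2_def ou3_def ov1_def ov2_def ov3_def

instantiation oct :: (comm_ring_1) ab_group_add
begin
definition plus_oct_def: "x + y = oadd x y"
definition zero_oct_def: "0 = ozero"
definition uminus_oct_def: "- x = osmult (-1) x"
definition minus_oct_def: "x - y = oadd x (osmult (-1) y)"
instance
proof
  fix a b c :: "'a oct"
  show "a + b + c = a + (b + c)"
    by (cases a rule: oct_cases3; cases b rule: oct_cases3; cases c rule: oct_cases3)
      (simp add: plus_oct_def odefs algebra_simps)
  show "a + b = b + a"
    by (cases a rule: oct_cases3; cases b rule: oct_cases3)
      (simp add: plus_oct_def odefs algebra_simps)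
  show "0 + a = a"
    by (cases a rule: oct_cases3) (simp add: plus_oct_def zero_oct_def odefs algebra_simps)
  show "- a + a = 0"
    by (cases a rule: oct_cases3) (simp add: plus_oct_def uminus_oct_def zero_oct_def odefs algebra_simps)
  show "a - b = a + - b"
    by (simp add: plus_oct_def uminus_oct_def minus_oct_def)
qed
end

lemmas odefs2 = odefs plus_oct_def zero_oct_def uminus_oct_def minus_oct_def

lemma ozero_eq: "ozero = 0" by (simp add: zero_oct_def)

lemma omult_add_left: "omult (x + y) z = omult x z + omult y z"
  by (cases x rule: oct_cases3; cases y rule: oct_cases3; cases z rule: oct_cases3)
     (simp add: odefs2 algebra_simps)
lemma omult_add_right: "omult z (x + y) = omult z x + omult z y"
  by (cases x rule: oct_cases3; cases y rule: oct_cases3; cases z rule: oct_cases3)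
     (simp add: odefs2 algebra_simps)
lemma omult_smult_left: "omult (osmult c x) z = osmult c (omult x z)"
  by (cases x rule: oct_cases3; cases z rule: oct_cases3)
     (simp add: odefs2 algebra_simps)
lemma omult_smult_right: "omult z (osmult c x) = osmult c (omult z x)"
  by (cases x rule: oct_cases3; cases z rule: oct_cases3)
     (simp add: odefs2 algebra_simps)
lemma omult_zero_left[simp]: "omult 0 z = 0"
  by (cases z rule: oct_cases3) (simp add: odefs2)
lemma omult_zero_right[simp]: "omult z 0 = 0"
  by (cases z rule: oct_cases3) (simp add: odefs2)
lemma otr_add: "otr (x + y) = otr x + otr y"
  by (simp add: odefs2)
lemma otr_zero[simp]: "otr 0 = 0"
  by (simp add: odefs2)
lemma otr_smult: "otr (osmult c x) = c * otr x"
  by (simp add: odefs2 algebra_simps)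
lemma osmult_add: "osmult c (x + y) = osmult c x + osmult c y"
  by (cases x rule: oct_cases3; cases y rule: oct_cases3) (simp add: odefs2 algebra_simps)
lemma osmult_zero[simp]: "osmult c 0 = 0"
  by (simp add: odefs2)
lemma osmult_osmult: "osmult c (osmult d x) = osmult (c*d) x"
  by (cases x rule: oct_cases3) (simp add: odefs2 algebra_simps)
lemma otr_diff: "otr (x - y) = otr x - otr y"
  by (simp add: odefs2)

lemma otr_sum: "otr (sum f A) = (\<Sum>i\<in>A. otr (f i))"
  using sum_comp_morphism[of otr f A] by (simp add: otr_add o_def)
lemma omult_sum_left: "omult (sum f A) z = (\<Sum>i\<in>A. omult (f i) z)"
  using sum_comp_morphism[of "\<lambda>x. omult x z" f A] by (simp add: omult_add_left o_def)
lemma omult_sum_right: "omult z (sum f A) = (\<Sum>i\<in>A. omult z (f i))"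
  using sum_comp_morphism[of "\<lambda>x. omult z x" f A] by (simp add: omult_add_right o_def)
lemma osmult_sum: "osmult c (sum f A) = (\<Sum>i\<in>A. osmult c (f i))"
  using sum_comp_morphism[of "\<lambda>x. osmult c x" f A] by (simp add: osmult_add o_def)

lemma omult_diff_left: "omult (x - y) z = omult x z - omult y z"
  by (cases x rule: oct_cases3; cases y rule: oct_cases3; cases z rule: oct_cases3)
     (simp add: odefs2 algebra_simps)
lemma osmult_add_scalar: "osmult (c + d) x = osmult c x + osmult d x"
  by (cases x rule: oct_cases3) (simp add: odefs2 algebra_simps)

lemma I1: "otr (omult x y) = otr (omult y x)"
  by (cases x rule: oct_cases3; cases y rule: oct_cases3) (simp add: odefs2 algebra_simps)
lemma Icyc: "otr (omult (omult x y) z) = otr (omult (omult y z) x)"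
  by (cases x rule: oct_cases3; cases y rule: oct_cases3; cases z rule: oct_cases3)
     (simp add: odefs2 algebra_simps)
lemma Iswap: "otr (omult (omult y x) z) = otr x * otr (omult y z) + otr y * otr (omult x z)
   - (otr x * otr y - otr (omult x y)) * otr z - otr (omult (omult x y) z)"
  by (cases x rule: oct_cases3; cases y rule: oct_cases3; cases z rule: oct_cases3)
     (simp add: odefs2 algebra_simps)
lemma Isq: "otr (omult (omult x x) z) = otr x * otr (omult x z) - onorm x * otr z"
  by (cases x rule: oct_cases3; cases z rule: oct_cases3)
     (simp add: odefs2 algebra_simps)
lemma Itr2: "otr (omult x x) = otr x ^ 2 - 2 * onorm x"
  by (cases x rule: oct_cases3) (simp add: odefs2 algebra_simps power2_eq_square)

definition coord :: "nat \<Rightarrow> 'a::comm_ring_1 oct \<Rightarrow> 'a" where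
  "coord k x = (if k < 8 then [oa x, ob x, fst (ou x), fst (ov x), fst (snd (ou x)), fst (snd (ov x)),
                snd (snd (ou x)), snd (snd (ov x))] ! k else 0)"

definition bas :: "nat \<Rightarrow> 'a::comm_ring_1 oct" where
  "bas k = [oe1, oe2, ou1, ov1, ou2, ov2, ou3, ov3] ! k"

definition dual :: "nat \<Rightarrow> nat" where
  "dual k = (if k < 2 then k else if even k then k + 1 else k - 1)"

definition lin :: "(nat \<Rightarrow> 'a::comm_ring_1 oct) \<Rightarrow> 'a oct \<Rightarrow> 'a oct" where
  "lin x p = (\<Sum>k<8. osmult (coord k p) (x k))"

lemma less8: "(k::nat) < 8 \<longleftrightarrow> k = 0 \<or> k = 1 \<or> k = 2 \<or> k = 3 \<or> k = 4 \<or> k = 5 \<or> k = 6 \<or> k = 7"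
  by auto

lemma sum8: "(\<Sum>k<(8::nat). f k) = f 0 + f 1 + f 2 + f 3 + f 4 + f 5 + f 6 + (f 7 :: 'b::comm_monoid_add)"
  by (simp add: numeral_eq_Suc lessThan_Suc add.commute add.left_commute)

lemma dual_lt: "k < 8 \<Longrightarrow> dual k < 8"
  by (auto simp: dual_def less8)
lemma dual_dual: "k < 8 \<Longrightarrow> dual (dual k) = k"
  by (auto simp: dual_def less8)

lemma coord_expand: "lin bas p = p"
  by (cases p rule: oct_cases3) (simp add: lin_def sum8 coord_def bas_def odefs2)

lemma coord_tr: "k < 8 \<Longrightarrow> coord k w = otr (omult w (bas (dual k)))"
  by (cases w rule: oct_cases3) (auto simp: less8 coord_def bas_def dual_def odefs2)

lemma gram: "i < 8 \<Longrightarrow> j < 8 \<Longrightarrow> otr (omult (bas i) (bas j)) = (if j = dual i then 1 else 0)"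
  unfolding less8 by (elim disjE) (simp_all add: bas_def dual_def odefs2)

lemma coord_add: "coord k (p + q) = coord k p + coord k q"
  by (cases p rule: oct_cases3; cases q rule: oct_cases3) (simp add: coord_def odefs2 nth_Cons' )
lemma coord_smult: "coord k (osmult c p) = c * coord k p"
  by (cases p rule: oct_cases3) (simp add: coord_def odefs2 nth_Cons' )
lemma coord_zero[simp]: "coord k (0::'a::comm_ring_1 oct) = 0"
  by (simp add: coord_def odefs2 nth_Cons' )
lemma coord_bas: "k < 8 \<Longrightarrow> j < 8 \<Longrightarrow> coord k (bas j) = (if k = j then 1 else 0)"
  by (auto simp: less8 coord_def bas_def odefs2)

lemma lin_bas: "j < 8 \<Longrightarrow> lin x (bas j) = x j"
proof -
  assume j: "j < 8"
  have "lin x (bas j) = (\<Sum>k<8. if k = j then x k else 0)"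
    unfolding lin_def by (rule sum.cong) (auto simp: coord_bas j odefs2 oct_eqI)
  also have "\<dots> = x j" using j by simp
  finally show ?thesis .
qed

lemma osmult_one: "osmult 1 x = x" by (cases x rule: oct_cases3) (simp add: odefs2)
lemma osmult_zero_left: "osmult 0 x = 0" by (cases x rule: oct_cases3) (simp add: odefs2)

lemma lin_add: "lin x (p + q) = lin x p + lin x q"
  by (simp add: lin_def coord_add osmult_add_scalar sum.distrib)
lemma lin_smult: "lin x (osmult c p) = osmult c (lin x p)"
  by (simp add: lin_def coord_smult osmult_osmult osmult_sum)
lemma lin_zero[simp]: "lin x 0 = 0"
  by (simp add: lin_def osmult_zero_left)

lemma tr_lin: "otr (omult (lin x p) z) = (\<Sum>i<8. coord i p * otr (omult (x i) z))"
  by (simp add: lin_def omult_sum_left otr_sum omult_smult_left otr_smult)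

lemma tr_lin2: "otr (omult (omult (lin x p) (lin x q)) z) =
   (\<Sum>i<8. \<Sum>j<8. coord i p * coord j q * otr (omult (omult (x i) (x j)) z))"
proof -
  have "otr (omult (omult (lin x p) (lin x q)) z) =
     (\<Sum>i<8. coord i p * otr (omult (omult (x i) (lin x q)) z))"
    by (simp add: lin_def[of x p] omult_sum_left otr_sum omult_smult_left otr_smult)
  also have "\<dots> = (\<Sum>i<8. coord i p * (\<Sum>j<8. coord j q * otr (omult (omult (x i) (x j)) z)))"
    by (simp add: lin_def[of x q] omult_sum_left omult_sum_right otr_sum omult_smult_left
       omult_smult_right otr_smult)
  finally show ?thesis by (simp add: sum_distrib_left mult.assoc)
qed


lemma key:
  fixes x :: "nat \<Rightarrow> 'a::field oct"
  assumes G: "\<And>i j. i<8 \<Longrightarrow> j<8 \<Longrightarrow> otr (omult (x i) (x j)) = otr (omult (bas i) (bas j))"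
    and w: "\<And>k. k<8 \<Longrightarrow> otr (omult w (x k)) = 0"
  shows "w = 0"
proof -
  define R :: "'a mat" where "R = mat 8 8 (\<lambda>(k,l). otr (omult (bas l) (x k)))"
  define S :: "'a mat" where "S = mat 8 8 (\<lambda>(l,m). coord l (x (dual m)))"
  have RS: "R * S = 1\<^sub>m 8"
  proof (rule eq_matI)
    fix k m assume k: "k < dim_row (1\<^sub>m 8)" and m: "m < dim_col (1\<^sub>m 8)"
    have "(R*S) $$ (k,m) = (\<Sum>l<8. coord l (x (dual m)) * otr (omult (bas l) (x k)))"
      using k m by (simp add: R_def S_def scalar_prod_def atLeast0LessThan mult.commute)
    also have "\<dots> = otr (omult (x (dual m)) (x k))"
      by (rule tr_lin[of bas "x (dual m)" "x k", unfolded coord_expand, symmetric])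
    also have "\<dots> = otr (omult (bas (dual m)) (bas k))" using G dual_lt k m by simp
    also have "\<dots> = 1\<^sub>m 8 $$ (k,m)" using gram[of "dual m" k] dual_dual[of m] dual_lt[of m] k m
      by auto
    finally show "(R*S) $$ (k,m) = 1\<^sub>m 8 $$ (k,m)" .
  qed (simp_all add: R_def S_def)
  have SR: "S * R = 1\<^sub>m 8"
    by (rule mat_mult_left_right_inverse[OF _ _ RS]) (simp_all add: R_def S_def)
  have c0: "coord i w = 0" for i
  proof (cases "i < 8")
    case i: True
    have "coord i w = (\<Sum>j<8. if i = j then coord j w else 0)"
      using i by (simp add: sum.delta)
    also have "\<dots> = (\<Sum>j<8. (S*R) $$ (i,j) * coord j w)"
      using i by (intro sum.cong) (simp_all add: SR)
    also have "\<dots> = (\<Sum>j<8. \<Sum>l<8. S$$(i,l) * R$$(l,j) * coord j w)"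
      using i by (intro sum.cong) (simp_all add: R_def S_def scalar_prod_def atLeast0LessThan sum_distrib_right)
    also have "\<dots> = (\<Sum>l<8. S$$(i,l) * (\<Sum>j<8. coord j w * otr (omult (bas j) (x l))))"
      by (subst sum.swap) (intro sum.cong, simp_all add: sum_distrib_left R_def mult_ac)
    also have "\<dots> = (\<Sum>l<8. S$$(i,l) * otr (omult w (x l)))"
      using tr_lin[of bas w, unfolded coord_expand] by simp
    also have "\<dots> = 0" using w by simp
    finally show ?thesis .
  next
    case False then show ?thesis by (simp add: coord_def)
  qed
  have "w = lin bas w" by (simp add: coord_expand)
  also have "\<dots> = 0" by (simp add: lin_def c0 osmult_zero_left)
  finally show ?thesis .
qed


lemma ext_inv:
  fixes p q :: "nat \<Rightarrow> 'a::comm_ring_1 oct"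
  assumes N: "\<And>i. i<8 \<Longrightarrow> onorm (p i) = onorm (q i)"
    and Tr: "\<And>i. i<8 \<Longrightarrow> otr (p i) = otr (q i)"
    and P2: "\<And>i j. i<j \<Longrightarrow> j<8 \<Longrightarrow> otr (omult (p i) (p j)) = otr (omult (q i) (q j))"
    and P3: "\<And>i j k. i<j \<Longrightarrow> j<k \<Longrightarrow> k<8 \<Longrightarrow>
       otr (omult (omult (p i) (p j)) (p k)) = otr (omult (omult (q i) (q j)) (q k))"
  shows "\<And>i j. i<8 \<Longrightarrow> j<8 \<Longrightarrow> otr (omult (p i) (p j)) = otr (omult (q i) (q j))"
    and "\<And>i j k. i<8 \<Longrightarrow> j<8 \<Longrightarrow> k<8 \<Longrightarrow>
       otr (omult (omult (p i) (p j)) (p k)) = otr (omult (omult (q i) (q j)) (q k))"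
proof -
  show G: "otr (omult (p i) (p j)) = otr (omult (q i) (q j))" if "i<8" "j<8" for i j
  proof (cases i j rule: linorder_cases)
    case less then show ?thesis using P2 that by simp
  next
    case equal then show ?thesis using Itr2[of "p i"] Itr2[of "q i"] N[OF that(1)] Tr[OF that(1)] by simp
  next
    case greater then show ?thesis using P2[of j i] that I1[of "p i" "p j"] I1[of "q i" "q j"] by simp
  qed
  define P where "P i j k \<longleftrightarrow> otr (omult (omult (p i) (p j)) (p k)) = otr (omult (omult (q i) (q j)) (q k))" for i j k
  have cyc: "P i j k \<longleftrightarrow> P j k i" for i j k
    unfolding P_def using Icyc[of "p i" "p j" "p k"] Icyc[of "q i" "q j" "q k"] by simp
  have swap: "P i j k \<longleftrightarrow> P j i k" if "i<8" "j<8" "k<8" for i j k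
  proof -
    have e: "otr (omult (omult (r j) (r i)) (r k)) = otr (r i) * otr (omult (r j) (r k)) + otr (r j) * otr (omult (r i) (r k))
   - (otr (r i) * otr (r j) - otr (omult (r i) (r j))) * otr (r k) - otr (omult (omult (r i) (r j)) (r k))" for r :: "nat \<Rightarrow> 'a oct"
      by (rule Iswap)
    show ?thesis unfolding P_def using e[of p] e[of q] G[of i j] G[of j k] G[of i k] Tr[of i] Tr[of j] Tr[of k] that by simp
  qed
  have sq: "P i i k" if "i<8" "k<8" for i k
    unfolding P_def using Isq[of "p i" "p k"] Isq[of "q i" "q k"] N[of i] Tr[of k] Tr[of i] G[of i k] that by simp
  have A: "P i j k" if "i \<le> j" "j \<le> k" "k < 8" for i j k
  proof -
    have "i = j \<or> j = k \<or> (i < j \<and> j < k)" using that by linarith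
    then consider "i = j" | "j = k" | "i < j \<and> j < k" by blast
    then show ?thesis
    proof cases
      case 1
      have "P j j k" by (rule sq) (use that in linarith)+
      then show ?thesis using 1 by simp
    next
      case 2
      have "P j j i" by (rule sq) (use that in linarith)+
      then show ?thesis using 2 cyc[of i j j] by simp
    next
      case 3
      show ?thesis unfolding P_def by (rule P3) (use 3 that in auto)
    qed
  qed
  show "otr (omult (omult (p i) (p j)) (p k)) = otr (omult (omult (q i) (q j)) (q k))"
    if "i<8" "j<8" "k<8" for i j k
  proof -
    have "P i j k"
    proof -
      have "(i \<le> j \<and> j \<le> k) \<or> (i \<le> k \<and> k \<le> j) \<or> (j \<le> i \<and> i \<le> k) \<or> (j \<le> k \<and> k \<le> i)
        \<or> (k \<le> i \<and> i \<le> j) \<or> (k \<le> j \<and> j \<le> i)" by linarith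
      then consider "i \<le> j" "j \<le> k" | "i \<le> k" "k \<le> j" | "j \<le> i" "i \<le> k" | "j \<le> k" "k \<le> i"
        | "k \<le> i" "i \<le> j" | "k \<le> j" "j \<le> i" by blast
      then show ?thesis
      proof cases
        case 1 then show ?thesis using A that by simp
      next
        case 2 then show ?thesis using A[of i k j] cyc[of i j k] cyc[of j k i] swap[of k i j] that by simp
      next
        case 3 then show ?thesis using A[of j i k] swap[of i j k] that by simp
      next
        case 4 then show ?thesis using A[of j k i] cyc[of i j k] that by simp
      next
        case 5 then show ?thesis using A[of k i j] cyc[of i j k] cyc[of j k i] that by simp
      next
        case 6 then show ?thesis using A[of k j i] swap[of i j k] cyc[of j i k] cyc[of i k j] that by simp
      qed
    qed
    then show ?thesis unfolding P_def .
  qed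
qed

lemma hom:
  fixes x :: "nat \<Rightarrow> 'a::field oct"
  assumes G: "\<And>i j. i<8 \<Longrightarrow> j<8 \<Longrightarrow> otr (omult (x i) (x j)) = otr (omult (bas i) (bas j))"
    and T: "\<And>i j k. i<8 \<Longrightarrow> j<8 \<Longrightarrow> k<8 \<Longrightarrow>
       otr (omult (omult (x i) (x j)) (x k)) = otr (omult (omult (bas i) (bas j)) (bas k))"
  shows "lin x \<in> G2"
proof -
  have L1: "otr (omult (lin x p) (x k)) = otr (omult p (bas k))" if k: "k<8" for p k
  proof -
    have "otr (omult (lin x p) (x k)) = (\<Sum>i<8. coord i p * otr (omult (bas i) (bas k)))"
      unfolding tr_lin using G k by (intro sum.cong) auto
    also have "\<dots> = otr (omult p (bas k))"
      by (rule tr_lin[of bas p, unfolded coord_expand, symmetric])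
    finally show ?thesis .
  qed
  have L2: "otr (omult (omult (lin x p) (lin x q)) (x k)) = otr (omult (omult p q) (bas k))"
    if k: "k<8" for p q k
  proof -
    have "otr (omult (omult (lin x p) (lin x q)) (x k)) =
       (\<Sum>i<8. \<Sum>j<8. coord i p * coord j q * otr (omult (omult (bas i) (bas j)) (bas k)))"
      unfolding tr_lin2 using T k by (intro sum.cong) auto
    also have "\<dots> = otr (omult (omult p q) (bas k))"
      by (rule tr_lin2[of bas p q, unfolded coord_expand, symmetric])
    finally show ?thesis .
  qed
  have mult: "lin x (omult p q) = omult (lin x p) (lin x q)" for p q
  proof -
    have "lin x (omult p q) - omult (lin x p) (lin x q) = 0"
      by (rule key[OF G]) (simp_all add: omult_diff_left otr_diff L1 L2)
    then show ?thesis by simp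
  qed
  have inj: "inj (lin x)"
  proof (rule injI)
    fix p q assume e: "lin x p = lin x q"
    have c: "coord k p = coord k q" for k
    proof (cases "k < 8")
      case True
      then show ?thesis using L1[of "dual k" p] L1[of "dual k" q] e coord_tr dual_lt by metis
    next
      case False then show ?thesis by (simp add: coord_def)
    qed
    have "p = lin bas p" by (simp add: coord_expand)
    also have "\<dots> = lin bas q" by (simp add: lin_def c)
    also have "\<dots> = q" by (simp add: coord_expand)
    finally show "p = q" .
  qed
  have coord_sum: "coord j (sum f A) = (\<Sum>i\<in>A. coord j (f i))" for j f and A :: "nat set"
    using sum_comp_morphism[of "coord j" f A] by (simp add: coord_add o_def)
  have surj: "surj (lin x)"
  proof -
    have "w \<in> range (lin x)" for w
    proof -
      define p where "p = (\<Sum>k<8. osmult (otr (omult w (x (dual k)))) (bas k))"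
      have cp: "coord j p = otr (omult w (x (dual j)))" if j: "j<8" for j
      proof -
        have "coord j p = (\<Sum>k<8. if j = k then otr (omult w (x (dual k))) else 0)"
          unfolding p_def coord_sum using j by (intro sum.cong) (auto simp: coord_smult coord_bas)
        also have "\<dots> = otr (omult w (x (dual j)))" using j by (simp add: sum.delta)
        finally show ?thesis .
      qed
      have "lin x p - w = 0"
      proof (rule key[OF G])
        fix k :: nat assume k: "k<8"
        have "otr (omult (lin x p) (x k)) = otr (omult p (bas k))" by (rule L1[OF k])
        also have "\<dots> = coord (dual k) p" using coord_tr[of "dual k" p] dual_dual[OF k] dual_lt[OF k] by simp
        also have "\<dots> = otr (omult w (x k))" using cp[of "dual k"] dual_dual[OF k] dual_lt[OF k] by simp
        finally show "otr (omult (lin x p - w) (x k)) = 0" by (simp add: omult_diff_left otr_diff)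
      qed
      then show ?thesis by (metis right_minus_eq rangeI)
    qed
    then show ?thesis by blast
  qed
  show ?thesis unfolding G2_def
    using inj surj mult lin_add lin_smult by (auto simp: bij_def plus_oct_def[symmetric])
qed


lemma G2_comp: "g \<in> G2 \<Longrightarrow> h \<in> G2 \<Longrightarrow> h \<circ> g \<in> G2"
  unfolding G2_def by (auto intro: bij_comp)

lemma G2_inv: assumes "g \<in> G2" shows "inv_into UNIV g \<in> G2"
proof -
  have b: "bij g" and a: "\<And>x y. g (oadd x y) = oadd (g x) (g y)"
    and s: "\<And>c x. g (osmult c x) = osmult c (g x)"
    and m: "\<And>x y. g (omult x y) = omult (g x) (g y)" using assms unfolding G2_def by auto
  have gi: "g (inv_into UNIV g y) = y" for y using b by (simp add: bij_is_surj surj_f_inv_f)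
  have ii: "inv_into UNIV g (g y) = y" for y using b by (simp add: bij_is_inj)
  have "inv_into UNIV g (oadd x y) = oadd (inv_into UNIV g x) (inv_into UNIV g y)" for x y
    by (metis a gi ii)
  moreover have "inv_into UNIV g (osmult c x) = osmult c (inv_into UNIV g x)" for c x
    by (metis s gi ii)
  moreover have "inv_into UNIV g (omult x y) = omult (inv_into UNIV g x) (inv_into UNIV g y)" for x y
    by (metis m gi ii)
  ultimately show ?thesis unfolding G2_def using b bij_imp_bij_inv by blast
qed

lemma orbit_map: assumes g: "g \<in> G2" shows "G2_orbit (map g a) = G2_orbit a"
proof
  show "G2_orbit (map g a) \<subseteq> G2_orbit a"
    unfolding G2_orbit_def using G2_comp[OF g] by (auto simp: map_map)
next
  have ii: "inv_into UNIV g (g y) = y" for y using g by (simp add: G2_def bij_is_inj)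
  have "map h a = map (h \<circ> inv_into UNIV g) (map g a)" for h :: "'a oct \<Rightarrow> 'a oct"
    by (simp add: ii)
  then show "G2_orbit a \<subseteq> G2_orbit (map g a)"
    unfolding G2_orbit_def using G2_comp[OF G2_inv[OF g]] by blast
qed

theorem lemma7p9:
  fixes n :: nat and b :: "'a::alg_closed_field oct list"
  assumes "CHAR('a) = 2"
    and "n \<ge> 8"
    and "length b = n"
    and "same_S3 n ([oe1, oe2, ou1, ov1, ou2, ov2, ou3, ov3] @ replicate (n - 8) ozero) b"
  shows "G2_orbit ([oe1, oe2, ou1, ov1, ou2, ov2, ou3, ov3] @ replicate (n - 8) ozero) = G2_orbit b"
proof -
  define a :: "'a oct list" where "a = [oe1, oe2, ou1, ov1, ou2, ov2, ou3, ov3] @ replicate (n - 8) ozero"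
  define x where "x k = b ! k" for k
  have la: "length a = n" using assms(2) by (simp add: a_def)
  have ab: "k < 8 \<Longrightarrow> a ! k = bas k" for k by (auto simp: a_def bas_def less8)
  have az: "8 \<le> k \<Longrightarrow> k < n \<Longrightarrow> a ! k = 0" for k by (simp add: a_def nth_append ozero_eq)
  note S = assms(4)[folded a_def, unfolded same_S3_def]
  have N: "onorm (bas i) = onorm (x i)" if "i<8" for i
  proof -
    have "i < n" using that assms(2) by linarith
    then have "onorm (a!i) = onorm (b!i)" using S by blast
    then show ?thesis using ab[OF that] x_def by simp
  qed
  have Tr: "otr (bas i) = otr (x i)" if "i<8" for i
  proof -
    have "i < n" using that assms(2) by linarith
    then have "otr (a!i) = otr (b!i)" using S by blast
    then show ?thesis using ab[OF that] x_def by simp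
  qed
  have P2: "otr (omult (bas i) (bas j)) = otr (omult (x i) (x j))" if "i<j" "j<8" for i j
  proof -
    have "i < j \<and> j < n" using that assms(2) by linarith
    then have "otr (omult (a!i) (a!j)) = otr (omult (b!i) (b!j))" using S by blast
    then show ?thesis using ab[of i] ab[of j] that x_def by simp
  qed
  have P3: "otr (omult (omult (bas i) (bas j)) (bas k)) = otr (omult (omult (x i) (x j)) (x k))"
    if "i<j" "j<k" "k<8" for i j k
  proof -
    have "i < j \<and> j < k \<and> k < n" using that assms(2) by linarith
    then have "otr (omult (omult (a!i) (a!j)) (a!k)) = otr (omult (omult (b!i) (b!j)) (b!k))"
      using S by blast
    then show ?thesis using ab[of i] ab[of j] ab[of k] that x_def by simp
  qed
  have G: "otr (omult (x i) (x j)) = otr (omult (bas i) (bas j))" if "i<8" "j<8" for i j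
  proof -
    have "otr (omult (bas i) (bas j)) = otr (omult (x i) (x j))"
      using N Tr P2 P3 that by (rule ext_inv(1))
    then show ?thesis by simp
  qed
  have T: "otr (omult (omult (x i) (x j)) (x k)) = otr (omult (omult (bas i) (bas j)) (bas k))"
    if "i<8" "j<8" "k<8" for i j k 
  proof -
    have "otr (omult (omult (bas i) (bas j)) (bas k)) = otr (omult (omult (x i) (x j)) (x k))"
      using N Tr P2 P3 that by (rule ext_inv(2))
    then show ?thesis by simp
  qed
  have gG: "lin x \<in> G2" by (rule hom[OF G T])
  have bz: "b ! k = 0" if k: "8 \<le> k" "k < n" for k
  proof (rule key[OF G])
    fix i :: nat assume i: "i < 8"
    have "otr (omult (b ! k) (x i)) = otr (omult (x i) (b ! k))" by (rule I1)
    also have "\<dots> = otr (omult (a ! i) (a ! k))" 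
    proof -
      have "i < k \<and> k < n" using i k by linarith
      then have "otr (omult (a!i) (a!k)) = otr (omult (b!i) (b!k))" using S by blast
      then show ?thesis using x_def by simp
    qed
    also have "\<dots> = 0" using az[OF k] by simp
    finally show "otr (omult (b ! k) (x i)) = 0" .
  qed
  have bmap: "b = map (lin x) a"
  proof (rule nth_equalityI)
    show "length b = length (map (lin x) a)" using la assms(3) by simp
    fix k assume "k < length b"
    then have k: "k < n" using assms(3) by simp
    show "b ! k = map (lin x) a ! k"
    proof (cases "k < 8")
      case True then show ?thesis using la k ab[OF True] lin_bas[OF True, of x] x_def[of k] by simp
    next
      case False then show ?thesis using la k az bz by simp
    qed
  qed
  show ?thesis unfolding a_def[symmetric] bmap orbit_map[OF gG] ..
qed

end
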